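(* Let $\Sigma\in\mathcal{G}_n$, let $S=S(\Sigma)$, $W=W(\Sigma)$, and let $Q_0$ be the unique regular rational orthogonal matrix with $Q_0^{\rm T}SQ_0=S(\Sigma^{\rm T})$, with level $\ell_0$. Let $p$ be an odd prime with $p\nmid\ell_0$. If $z$ is an integral vector with $W^{\rm T}z\equiv0\pmod p$, then $S^{\rm T}z\equiv0\pmod p$.
   Context: An oriented graph on vertices $v_1,\dots,v_n$ is a simple graph with each edge directed; its skew-adjacency matrix $S(\Sigma)=(s_{ij})$ has $s_{ij}=1$ if $(v_i,v_j)$ is an arc, $-1$ if $(v_j,v_i)$ is an arc, $0$ otherwise. The converse $\Sigma^{\rm T}$ reverses every arc, so $S(\Sigma^{\rm T})=-S(\Sigma)$. With $e$ the all-one vector, $W(\Sigma)=[e,Se,\dots,S^{n-1}e]$. $\mathcal{G}_n$ is the set of $n$-vertex oriented graphs with $2^{-\lfloor n/2\rfloor}\det W(\Sigma)$ an odd square-free integer. A rational orthogonal matrix $Q$ is regular if $Qe=e$; its level is the least positive integer $k$ with $kQ$ integral. Since $\det W(\Sigma)\ne0$, $Q_0$ exists and is unique. *)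

theory Defs
  imports "Jordan_Normal_Form.Determinant" "HOL-Computational_Algebra.Squarefree"
begin

definition oriented_graph :: "nat \<Rightarrow> (nat \<Rightarrow> nat \<Rightarrow> bool) \<Rightarrow> bool" where
  "oriented_graph n A \<longleftrightarrow> (\<forall>i j. A i j \<longrightarrow> i < n \<and> j < n \<and> i \<noteq> j \<and> \<not> A j i)"

definition skew_adj :: "nat \<Rightarrow> (nat \<Rightarrow> nat \<Rightarrow> bool) \<Rightarrow> int mat" where
  "skew_adj n A = mat n n (\<lambda>(i,j). if A i j then 1 else if A j i then -1 else 0)"

definition converse_graph :: "(nat \<Rightarrow> nat \<Rightarrow> bool) \<Rightarrow> (nat \<Rightarrow> nat \<Rightarrow> bool)" where
  "converse_graph A = (\<lambda>i j. A j i)"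

definition walk_mat :: "nat \<Rightarrow> int mat \<Rightarrow> int mat" where
  "walk_mat n S = mat n n (\<lambda>(i,j). ((S ^\<^sub>m j) *\<^sub>v vec n (\<lambda>_. 1)) $ i)"

definition in_G :: "nat \<Rightarrow> (nat \<Rightarrow> nat \<Rightarrow> bool) \<Rightarrow> bool" where
  "in_G n A \<longleftrightarrow> oriented_graph n A \<and>
     (\<exists>m::int. det (walk_mat n (skew_adj n A)) = 2 ^ (n div 2) * m \<and> odd m \<and> squarefree m)"

definition rat_orthogonal :: "nat \<Rightarrow> rat mat \<Rightarrow> bool" where
  "rat_orthogonal n Q \<longleftrightarrow> Q \<in> carrier_mat n n \<and> transpose_mat Q * Q = 1\<^sub>m n"

definition regular :: "nat \<Rightarrow> rat mat \<Rightarrow> bool" where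
  "regular n Q \<longleftrightarrow> Q *\<^sub>v vec n (\<lambda>_. 1) = vec n (\<lambda>_. 1)"

definition level :: "rat mat \<Rightarrow> nat" where
  "level Q = (LEAST k::nat. k > 0 \<and>
     (\<forall>i < dim_row Q. \<forall>j < dim_col Q. of_nat k * Q $$ (i,j) \<in> \<int>))"

end

theory Submission
  imports Defs
begin

lemma greatest_idx:
  assumes "k < (n::nat)" "P k"
  shows "\<exists>i<n. P i \<and> (\<forall>j<n. P j \<longrightarrow> j \<le> i)"
proof -
  let ?S = "{j. j < n \<and> P j}"
  have fin: "finite ?S" by simp
  have ne: "?S \<noteq> {}" using assms by auto
  have "Max ?S \<in> ?S" using Max_in[OF fin ne] .
  moreover have "\<forall>j<n. P j \<longrightarrow> j \<le> Max ?S" using fin by auto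
  ultimately show ?thesis by blast
qed

lemma mv_lin:
  fixes A :: "'a::comm_ring_1 mat"
  assumes A: "A \<in> carrier_mat m n" and x: "x \<in> carrier_vec n" and y: "y \<in> carrier_vec n" and i: "i < m"
  shows "(A *\<^sub>v vec n (\<lambda>k. a * x$k + b * y$k)) $ i = a * (A *\<^sub>v x)$i + b * (A *\<^sub>v y)$i"
  using A x y i
  by (auto simp: scalar_prod_def sum.distrib sum_distrib_left algebra_simps intro!: sum.cong)

lemma mv_dvd:
  fixes A :: "int mat"
  assumes A: "A \<in> carrier_mat m n" and x: "x \<in> carrier_vec n" and d: "\<forall>k<n. p dvd x$k" and i: "i < m"
  shows "p dvd (A *\<^sub>v x) $ i"
  using A x d i
  by (auto simp: scalar_prod_def intro!: dvd_sum)

lemma mv_cong: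
  fixes A :: "int mat"
  assumes A: "A \<in> carrier_mat m n" and x: "x \<in> carrier_vec n" and y: "y \<in> carrier_vec n"
    and d: "\<forall>k<n. p dvd (x$k - y$k)" and i: "i < m"
  shows "p dvd ((A *\<^sub>v x) $ i - (A *\<^sub>v y) $ i)"
proof -
  have "(A *\<^sub>v x) $ i - (A *\<^sub>v y) $ i = (\<Sum>k<n. A $$ (i,k) * (x$k - y$k))"
    using A x y i by (auto simp: scalar_prod_def sum_subtractf[symmetric] algebra_simps atLeast0LessThan intro!: sum.cong)
  also have "p dvd \<dots>" using d by (auto intro!: dvd_sum)
  finally show ?thesis .
qed

lemma dot_transpose:
  fixes A :: "'a::comm_ring_1 mat"
  assumes A: "A \<in> carrier_mat n n" and x: "x \<in> carrier_vec n" and y: "y \<in> carrier_vec n"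
  shows "x \<bullet> (A *\<^sub>v y) = (transpose_mat A *\<^sub>v x) \<bullet> y"
proof -
  have "x \<bullet> (A *\<^sub>v y) = (\<Sum>i<n. \<Sum>j<n. x$i * A$$(i,j) * y$j)"
    using A x y by (auto simp: scalar_prod_def sum_distrib_left algebra_simps atLeast0LessThan intro!: sum.cong)
  also have "\<dots> = (\<Sum>j<n. \<Sum>i<n. x$i * A$$(i,j) * y$j)" by (rule sum.swap)
  also have "\<dots> = (transpose_mat A *\<^sub>v x) \<bullet> y"
    using A x y by (auto simp: scalar_prod_def sum_distrib_right sum_distrib_left mult_ac atLeast0LessThan intro!: sum.cong)
  finally show ?thesis .
qed

lemma pow_mat_Suc_left:
  assumes A: "A \<in> carrier_mat n n"
  shows "A ^\<^sub>m Suc k = A * A ^\<^sub>m k"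
proof (induction k)
  case 0 then show ?case using A by simp
next
  case (Suc k)
  have "A ^\<^sub>m Suc (Suc k) = (A * A ^\<^sub>m k) * A" using Suc by simp
  also have "\<dots> = A * (A ^\<^sub>m k * A)" by (rule assoc_mult_mat[of _ n n _ n _ n], insert A, auto)
  finally show ?case by simp
qed

lemma pow_mat_add:
  assumes A: "A \<in> carrier_mat n n"
  shows "A ^\<^sub>m (m + k) = A ^\<^sub>m m * A ^\<^sub>m k"
proof (induction k)
  case 0 then show ?case using A by simp
next
  case (Suc k)
  have "A ^\<^sub>m (m + Suc k) = (A ^\<^sub>m m * A ^\<^sub>m k) * A" using Suc by simp
  also have "\<dots> = A ^\<^sub>m m * (A ^\<^sub>m k * A)" by (rule assoc_mult_mat[of _ n n _ n _ n], insert A, auto)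
  finally show ?case by simp
qed

lemma det_cols_dvd:
  fixes A :: "int mat"
  assumes A: "A \<in> carrier_mat n n" and C: "C \<subseteq> {0..<n}"
    and d: "\<forall>c\<in>C. \<forall>r<n. p dvd A $$ (r,c)"
  shows "p ^ card C dvd det A"
  unfolding det_def'[OF A]
proof (rule dvd_sum)
  fix \<pi> assume "\<pi> \<in> {\<pi>. \<pi> permutes {0..<n}}"
  hence pi: "\<pi> permutes {0..<n}" by simp
  let ?R = "{i\<in>{0..<n}. \<pi> i \<in> C}"
  have img: "\<pi> ` ?R = C"
  proof
    show "\<pi> ` ?R \<subseteq> C" by auto
    show "C \<subseteq> \<pi> ` ?R"
    proof
      fix c assume c: "c \<in> C"
      then have "c \<in> \<pi> ` {0..<n}" using C permutes_image[OF pi] by auto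
      then show "c \<in> \<pi> ` ?R" using c by auto
    qed
  qed
  have inj: "inj_on \<pi> ?R" using permutes_inj[OF pi] by (auto simp: inj_on_def)
  have cardR: "card ?R = card C" using card_image[OF inj] img by simp
  have "(\<Prod>i\<in>?R. p) dvd (\<Prod>i\<in>?R. A $$ (i, \<pi> i))"
    by (rule prod_dvd_prod, insert d, auto)
  hence "p ^ card C dvd (\<Prod>i\<in>?R. A $$ (i, \<pi> i))" using cardR by simp
  also have "\<dots> dvd (\<Prod>i = 0..<n. A $$ (i, \<pi> i))"
    by (rule prod_dvd_prod_subset, auto)
  finally show "p ^ card C dvd signof \<pi> * (\<Prod>i = 0..<n. A $$ (i, \<pi> i))" by simp
qed

lemma dep_lemma:
  fixes M :: "int mat" and p :: int
  assumes M: "M \<in> carrier_mat n n" and p: "prime p" and nd: "\<not> p^2 dvd det M"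
    and u: "u \<in> carrier_vec n" and v: "v \<in> carrier_vec n"
    and Mu: "\<forall>i<n. p dvd (M *\<^sub>v u)$i" and Mv: "\<forall>i<n. p dvd (M *\<^sub>v v)$i"
  shows "\<exists>a b. \<not>(p dvd a \<and> p dvd b) \<and> (\<forall>i<n. p dvd (a * u$i + b * v$i))"
proof (cases "\<forall>i<n. p dvd u$i")
  case True
  have "\<not> p dvd 1" using p not_prime_unit by blast
  then show ?thesis using True by (intro exI[of _ 1] exI[of _ 0]) auto
next
  case False
  then obtain k where "k < n" "\<not> p dvd u$k" by auto
  from greatest_idx[of k n "\<lambda>k. \<not> p dvd u$k", OF this]
  obtain i where i: "i < n" "\<not> p dvd u$i" and imax: "\<forall>j<n. \<not> p dvd u$j \<longrightarrow> j \<le> i" by blast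
  define w where "w = vec n (\<lambda>k. u$i * v$k + (- v$i) * u$k)"
  have w: "w \<in> carrier_vec n" unfolding w_def by simp
  have wi: "w$i = 0" using i unfolding w_def by simp
  have Mw: "\<forall>r<n. p dvd (M *\<^sub>v w)$r"
  proof (intro allI impI)
    fix r assume r: "r < n"
    have "(M *\<^sub>v w)$r = u$i * (M *\<^sub>v v)$r + (- v$i) * (M *\<^sub>v u)$r"
      unfolding w_def by (rule mv_lin[OF M v u r])
    then show "p dvd (M *\<^sub>v w)$r" using Mu Mv r by simp
  qed
  show ?thesis
  proof (cases "\<forall>k<n. p dvd w$k")
    case True
    show ?thesis
      by (rule exI[of _ "- v$i"], rule exI[of _ "u$i"], insert True i, auto simp: w_def algebra_simps)
  next
    case False
    then obtain k where "k < n" "\<not> p dvd w$k" by auto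
    from greatest_idx[of k n "\<lambda>k. \<not> p dvd w$k", OF this]
    obtain j where j: "j < n" "\<not> p dvd w$j" and jmax: "\<forall>l<n. \<not> p dvd w$l \<longrightarrow> l \<le> j" by blast
    have ij: "i \<noteq> j" using wi j by auto
    define u' where "u' = vec n (\<lambda>k. if k \<le> i then u$k else 0)"
    define w' where "w' = vec n (\<lambda>k. if k \<le> j then w$k else 0)"
    have u': "u' \<in> carrier_vec n" and w': "w' \<in> carrier_vec n" unfolding u'_def w'_def by auto
    have Mu': "\<forall>r<n. p dvd (M *\<^sub>v u')$r"
    proof (intro allI impI)
      fix r assume r: "r < n"
      have "p dvd ((M *\<^sub>v u)$r - (M *\<^sub>v u')$r)"
        by (rule mv_cong[OF M u u' _ r], insert imax, auto simp: u'_def)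
      moreover have "p dvd (M *\<^sub>v u)$r" using Mu r by simp
      ultimately have "p dvd (M *\<^sub>v u)$r - ((M *\<^sub>v u)$r - (M *\<^sub>v u')$r)" by (rule dvd_diff[rotated])
      then show "p dvd (M *\<^sub>v u')$r" by simp
    qed
    have Mw': "\<forall>r<n. p dvd (M *\<^sub>v w')$r"
    proof (intro allI impI)
      fix r assume r: "r < n"
      have "p dvd ((M *\<^sub>v w)$r - (M *\<^sub>v w')$r)"
        by (rule mv_cong[OF M w w' _ r], insert jmax, auto simp: w'_def)
      moreover have "p dvd (M *\<^sub>v w)$r" using Mw r by simp
      ultimately have "p dvd (M *\<^sub>v w)$r - ((M *\<^sub>v w)$r - (M *\<^sub>v w')$r)" by (rule dvd_diff[rotated])
      then show "p dvd (M *\<^sub>v w')$r" by simp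
    qed
    define Z where "Z = mat n n (\<lambda>(r,c). if c = i then u'$r else if c = j then w'$r else if r = c then 1 else (0::int))"
    have Z: "Z \<in> carrier_mat n n" unfolding Z_def by simp
    have ut: "upper_triangular Z"
      unfolding upper_triangular_def Z_def u'_def w'_def using i j by auto
    have "det Z = (\<Prod>k = 0..<n. Z $$ (k,k))"
      using det_upper_triangular[OF ut Z] Z by (simp add: prod_list_diag_prod)
    also have "\<dots> = (\<Prod>k = 0..<n. (if k = i then u$i else 1) * (if k = j then w$j else 1))"
      by (rule prod.cong, insert ij, auto simp: Z_def u'_def w'_def)
    also have "\<dots> = u$i * w$j"
      using i j by (simp add: prod.distrib)
    finally have detZ: "det Z = u$i * w$j" .
    have ndZ: "\<not> p dvd det Z" unfolding detZ using i j p by (simp add: prime_dvd_mult_iff)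
    have MZ: "M * Z \<in> carrier_mat n n" using M Z by simp
    have colZi: "col Z i = u'" using i u' unfolding Z_def by (intro eq_vecI) auto
    have colZj: "col Z j = w'" using j w' ij unfolding Z_def by (intro eq_vecI) auto
    have "p ^ card {i,j} dvd det (M * Z)"
    proof (rule det_cols_dvd[OF MZ])
      show "{i,j} \<subseteq> {0..<n}" using i j by auto
      show "\<forall>c\<in>{i, j}. \<forall>r<n. p dvd (M * Z) $$ (r, c)"
      proof (intro ballI allI impI)
        fix c r assume c: "c \<in> {i,j}" and r: "r < n"
        have "(M * Z) $$ (r,c) = (M *\<^sub>v col Z c) $ r"
          using M Z r c i j by auto
        then show "p dvd (M * Z) $$ (r, c)" using c colZi colZj Mu' Mw' r by auto
      qed
    qed
    hence "p^2 dvd det M * det Z" using ij det_mult[OF M Z] by (simp add: power2_eq_square)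
    moreover have "coprime (p^2) (det Z)"
      using ndZ p by (simp add: prime_imp_coprime)
    ultimately have "p^2 dvd det M" using coprime_dvd_mult_left_iff by blast
    with nd show ?thesis by simp
  qed
qed

lemma mat_of_int_inj:
  assumes "X \<in> carrier_mat n m" "Y \<in> carrier_mat n m"
    and "map_mat rat_of_int X = map_mat rat_of_int Y"
  shows "X = Y"
proof (rule eq_matI)
  fix i j assume ij: "i < dim_row Y" "j < dim_col Y"
  have "map_mat rat_of_int X $$ (i,j) = map_mat rat_of_int Y $$ (i,j)" using assms(3) by simp
  then show "X $$ (i,j) = Y $$ (i,j)" using ij assms(1,2) by auto
qed (insert assms, auto)

lemma mult_mat_vec_smult_int:
  fixes S :: "'a::comm_ring_1 mat"
  assumes "S \<in> carrier_mat n n" "v \<in> carrier_vec n"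
  shows "S *\<^sub>v (c \<cdot>\<^sub>v v) = c \<cdot>\<^sub>v (S *\<^sub>v v)"
  using assms by (intro eq_vecI) auto

lemma dot_dvd:
  fixes x y :: "int vec"
  assumes "x \<in> carrier_vec n" "y \<in> carrier_vec n" "\<forall>i<n. p dvd y$i"
  shows "p dvd x \<bullet> y"
  using assms by (auto simp: scalar_prod_def intro!: dvd_sum)

lemma skew_transpose:
  assumes or: "oriented_graph n A"
  shows "transpose_mat (skew_adj n A) = - skew_adj n A"
    and "skew_adj n (converse_graph A) = - skew_adj n A"
proof -
  have nb: "\<not> (A i j \<and> A j i)" for i j using or unfolding oriented_graph_def by blast
  show "transpose_mat (skew_adj n A) = - skew_adj n A"
  proof (rule eq_matI)
    fix i j assume ij: "i < dim_row (- skew_adj n A)" "j < dim_col (- skew_adj n A)"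
    then show "transpose_mat (skew_adj n A) $$ (i,j) = (- skew_adj n A) $$ (i,j)"
      using nb[of i j] unfolding skew_adj_def by auto
  qed (auto simp: skew_adj_def)
  show "skew_adj n (converse_graph A) = - skew_adj n A"
  proof (rule eq_matI)
    fix i j assume ij: "i < dim_row (- skew_adj n A)" "j < dim_col (- skew_adj n A)"
    then show "skew_adj n (converse_graph A) $$ (i,j) = (- skew_adj n A) $$ (i,j)"
      using nb[of i j] unfolding skew_adj_def converse_graph_def by auto
  qed (auto simp: skew_adj_def)
qed

lemma level_props:
  fixes Q :: "rat mat"
  assumes Q: "Q \<in> carrier_mat n n"
  shows "level Q > 0 \<and> (\<forall>i<n. \<forall>j<n. of_nat (level Q) * Q $$ (i,j) \<in> \<int>)"
proof -
  define D where "D = (\<Prod>ij\<in>{0..<n}\<times>{0..<n}. snd (quotient_of (Q $$ ij)))"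
  have Dpos: "D > 0" unfolding D_def
    by (rule prod_pos, auto intro: quotient_of_denom_pos')
  have int: "of_nat (nat D) * Q $$ (i,j) \<in> \<int>" if ij: "i < n" "j < n" for i j
  proof -
    obtain a b where ab: "quotient_of (Q $$ (i,j)) = (a,b)" by (cases "quotient_of (Q $$ (i,j))")
    have b: "b > 0" using quotient_of_denom_pos[OF ab] .
    have q: "Q $$ (i,j) = of_int a / of_int b" using quotient_of_div[OF ab] .
    have "snd (quotient_of (Q $$ (i,j))) dvd D" unfolding D_def
      using dvd_prodI[of "{0..<n}\<times>{0..<n}" "(i,j)" "\<lambda>ij. snd (quotient_of (Q $$ ij))"] ij by auto
    hence "b dvd D" using ab by simp
    then obtain t where t: "D = b * t" by auto
    have "of_nat (nat D) * Q $$ (i,j) = (of_int (b * t) :: rat) * (of_int a / of_int b)"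
      using Dpos t q by simp
    also have "\<dots> = of_int (a * t)" using b by (simp add: field_simps)
    finally show ?thesis by simp
  qed
  have ex: "\<exists>k::nat. k > 0 \<and> (\<forall>i < dim_row Q. \<forall>j < dim_col Q. of_nat k * Q $$ (i,j) \<in> \<int>)"
    using Dpos int Q by (intro exI[of _ "nat D"]) auto
  have "level Q > 0 \<and> (\<forall>i < dim_row Q. \<forall>j < dim_col Q. of_nat (level Q) * Q $$ (i,j) \<in> \<int>)"
    unfolding level_def by (rule LeastI_ex[OF ex])
  then show ?thesis using Q by auto
qed

lemma smult_one_mat_vec:
  fixes z :: "'a::comm_ring_1 vec"
  assumes z: "z \<in> carrier_vec n"
  shows "(c \<cdot>\<^sub>m 1\<^sub>m n) *\<^sub>v z = c \<cdot>\<^sub>v z"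
proof (rule eq_vecI)
  fix i assume "i < dim_vec (c \<cdot>\<^sub>v z)"
  hence i: "i < n" using z by simp
  have "((c \<cdot>\<^sub>m 1\<^sub>m n) *\<^sub>v z) $ i = (\<Sum>k = 0..<n. c * (if k = i then 1 else 0) * z $ k)"
    using i z by (simp add: scalar_prod_def)
  also have "\<dots> = (\<Sum>k\<in>{0..<n}. (if k = i then c * z$k else 0))"
    by (rule sum.cong) auto
  also have "\<dots> = c * z$i" using i by simp
  finally show "((c \<cdot>\<^sub>m 1\<^sub>m n) *\<^sub>v z) $ i = (c \<cdot>\<^sub>v z) $ i" using i z by simp
qed (use z in auto)

theorem lemma3p4:
  fixes n :: nat and A :: "nat \<Rightarrow> nat \<Rightarrow> bool" and Q0 :: "rat mat"
    and p :: nat and z :: "int vec"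
  assumes G: "in_G n A"
    and Q0_orth: "rat_orthogonal n Q0"
    and Q0_reg: "regular n Q0"
    and Q0_conj: "transpose_mat Q0 * map_mat rat_of_int (skew_adj n A) * Q0
                  = map_mat rat_of_int (skew_adj n (converse_graph A))"
    and p_prime: "prime p" and p_odd: "odd p"
    and p_ndvd: "\<not> p dvd level Q0"
    and z_dim: "z \<in> carrier_vec n"
    and Wz: "\<forall>i < n. int p dvd (transpose_mat (walk_mat n (skew_adj n A)) *\<^sub>v z) $ i"
  shows "\<forall>i < n. int p dvd (transpose_mat (skew_adj n A) *\<^sub>v z) $ i"
proof -
  define q where "q = int p"
  have q: "prime q" unfolding q_def using p_prime by simp
  define S where "S = skew_adj n A"
  define W where "W = walk_mat n S"
  define M where "M = transpose_mat W"
  define e where "e = vec n (\<lambda>_. 1::int)"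
  define f where "f k = (S ^\<^sub>m k *\<^sub>v e) \<bullet> z" for k
  have or: "oriented_graph n A" using G unfolding in_G_def by simp
  have S: "S \<in> carrier_mat n n" unfolding S_def skew_adj_def by simp
  have W: "W \<in> carrier_mat n n" unfolding W_def walk_mat_def by simp
  have M: "M \<in> carrier_mat n n" unfolding M_def using W by simp
  have e: "e \<in> carrier_vec n" unfolding e_def by simp
  have ST: "transpose_mat S = - S" unfolding S_def by (rule skew_transpose(1)[OF or])
  have STv: "transpose_mat S *\<^sub>v x = - (S *\<^sub>v x)" if "x \<in> carrier_vec n" for x
    unfolding ST using that S by simp
  have colW: "col W k = S ^\<^sub>m k *\<^sub>v e" if "k < n" for k
    using that S unfolding W_def walk_mat_def e_def by (intro eq_vecI) auto
  have Mv: "(M *\<^sub>v x) $ k = (S ^\<^sub>m k *\<^sub>v e) \<bullet> x" if "k < n" for k x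
    using that W colW unfolding M_def by simp
  have Mz: "q dvd (M *\<^sub>v z) $ k" if "k < n" for k
    using Wz that unfolding q_def M_def W_def S_def by blast
  have fdvd: "q dvd f k" if "k < n" for k
    using Mz[OF that] Mv[OF that, of z] unfolding f_def by simp
  obtain m where dW: "det W = 2 ^ (n div 2) * m" and m_odd: "odd m" and m_sf: "squarefree m"
    using G unfolding in_G_def W_def S_def by blast
  have dW0: "det W \<noteq> 0" using dW m_odd by auto
  have ndW: "\<not> q^2 dvd det W"
  proof
    assume "q^2 dvd det W"
    moreover have "coprime (q^2) (2 ^ (n div 2))"
    proof -
      have nq2: "\<not> q dvd 2"
      proof
        assume "q dvd 2"
        hence "p dvd 2" unfolding q_def by presburger
        hence "p \<le> 2" by (simp add: dvd_imp_le)
        with prime_ge_2_nat[OF p_prime] have "p = 2" by simp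
        with p_odd show False by simp
      qed
      have "coprime q 2" by (rule prime_imp_coprime[OF q nq2])
      thus ?thesis by simp
    qed
    ultimately have "q^2 dvd m" unfolding dW using coprime_dvd_mult_right_iff by blast
    with m_sf have "is_unit q" unfolding squarefree_def by blast
    with q show False using not_prime_unit by blast
  qed
  have TS: "transpose_mat (skew_adj n A) = transpose_mat S" unfolding S_def ..
  show ?thesis
  proof (cases "\<forall>i<n. q dvd z$i")
    case True
    show ?thesis unfolding q_def[symmetric] TS
      using mv_dvd[of "transpose_mat S" n n z q] S z_dim True by auto
  next
    case False
    then obtain i0 where i0: "i0 < n" "\<not> q dvd z$i0" by auto
    have detM: "det M = det W" unfolding M_def by (rule det_transpose[OF W])
    have qdW: "q dvd det W"
    proof -
      have adjM: "adj_mat M \<in> carrier_mat n n" "adj_mat M * M = det M \<cdot>\<^sub>m 1\<^sub>m n"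
        using adj_mat[OF M] by auto
      have "(adj_mat M *\<^sub>v (M *\<^sub>v z)) $ i0 = ((adj_mat M * M) *\<^sub>v z) $ i0"
        by (simp only: assoc_mult_mat_vec[OF adjM(1) M z_dim])
      also have "\<dots> = det M * z $ i0" unfolding adjM(2) smult_one_mat_vec[OF z_dim] using i0 z_dim
        by simp
      finally have eq: "(adj_mat M *\<^sub>v (M *\<^sub>v z)) $ i0 = det M * z $ i0" .
      have "q dvd (adj_mat M *\<^sub>v (M *\<^sub>v z)) $ i0"
        by (rule mv_dvd[OF adjM(1) _ _ i0(1)], insert M z_dim Mz, auto)
      hence "q dvd det M * z $ i0" unfolding eq .
      thus ?thesis using q i0 detM by (simp add: prime_dvd_mult_iff)
    qed
    have n0: "n > 0" using i0 by simp
    define adjW where "adjW = adj_mat W"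
    have adjW: "adjW \<in> carrier_mat n n" "W * adjW = det W \<cdot>\<^sub>m 1\<^sub>m n"
      using adj_mat[OF W] unfolding adjW_def by auto
    have "\<exists>r<n. \<exists>c<n. \<not> q dvd adjW $$ (r,c)"
    proof (rule ccontr)
      assume "\<not> ?thesis"
      hence alld: "\<forall>c\<in>{0..<n}. \<forall>r<n. q dvd adjW $$ (r,c)" by auto
      have "q ^ card {0..<n} dvd det adjW"
        by (rule det_cols_dvd[OF adjW(1) _ alld]) simp
      hence qn: "q ^ n dvd det adjW" by simp
      have "det W * det adjW = det W ^ n"
        using det_mult[OF W adjW(1)] adjW(2) by simp
      also have "\<dots> = det W * det W ^ (n - 1)" using n0 by (simp add: power_eq_if)
      finally have dadj: "det adjW = det W ^ (n - 1)" using dW0 by simp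
      obtain r where r: "det W = q * r" using qdW by auto
      have "q ^ (n - 1) * q dvd q ^ (n - 1) * r ^ (n - 1)"
        using qn unfolding dadj r power_mult_distrib
        by (metis n0 power_minus_mult)
      hence "q dvd r ^ (n - 1)" using q by (simp add: prime_gt_0_int)
      hence "q dvd r" using q prime_dvd_power by blast
      hence "q^2 dvd det W" unfolding r by (simp add: power2_eq_square)
      with ndW show False ..
    qed
    then obtain r0 c0 where rc: "r0 < n" "c0 < n" "\<not> q dvd adjW $$ (r0,c0)" by auto
    define a where "a = col adjW c0"
    have a: "a \<in> carrier_vec n" unfolding a_def carrier_vec_def using adjW(1) by simp
    have Wa: "q dvd (W *\<^sub>v a) $ i" if "i < n" for i
    proof -
      have "(W *\<^sub>v a) $ i = (W * adjW) $$ (i, c0)"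
        unfolding a_def using that rc W adjW(1) by simp
      also have "\<dots> = det W * (if i = c0 then 1 else 0)" unfolding adjW(2) using that rc by simp
      finally show ?thesis using qdW by simp
    qed
    from greatest_idx[of r0 n "\<lambda>k. \<not> q dvd a$k"] rc
    obtain d where d: "d < n" "\<not> q dvd a$d" and dmax: "\<forall>k<n. \<not> q dvd a$k \<longrightarrow> k \<le> d"
      unfolding a_def using adjW by auto
    have fn: "q dvd f n"
    proof -
      define l where "l = n - d"
      define y where "y = transpose_mat (S ^\<^sub>m l) *\<^sub>v z"
      have y: "y \<in> carrier_vec n" unfolding y_def carrier_vec_def using S by simp
      have Sl: "S ^\<^sub>m l \<in> carrier_mat n n" using S by simp
      have WTy: "(M *\<^sub>v y) $ k = f (l + k)" if "k < n" for k
      proof -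
        have Ske: "S ^\<^sub>m k *\<^sub>v e \<in> carrier_vec n" unfolding carrier_vec_def using S by simp
        have "(M *\<^sub>v y) $ k = (S ^\<^sub>m k *\<^sub>v e) \<bullet> y" by (rule Mv[OF that])
        also have "\<dots> = y \<bullet> (S ^\<^sub>m k *\<^sub>v e)" by (rule comm_scalar_prod[OF Ske y])
        also have "\<dots> = z \<bullet> (S ^\<^sub>m l *\<^sub>v (S ^\<^sub>m k *\<^sub>v e))"
          unfolding y_def using dot_transpose[OF Sl z_dim Ske] by simp
        also have "\<dots> = (S ^\<^sub>m (l + k) *\<^sub>v e) \<bullet> z"
        proof -
          have "(S ^\<^sub>m (l + k) *\<^sub>v e) = S ^\<^sub>m l *\<^sub>v (S ^\<^sub>m k *\<^sub>v e)"
            unfolding pow_mat_add[OF S] by (rule assoc_mult_mat_vec[OF Sl pow_carrier_mat[OF S] e])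
          moreover have "S ^\<^sub>m l *\<^sub>v (S ^\<^sub>m k *\<^sub>v e) \<in> carrier_vec n"
            unfolding carrier_vec_def using S by simp
          ultimately show ?thesis using comm_scalar_prod[OF z_dim] by simp
        qed
        finally show ?thesis unfolding f_def .
      qed
      have "y \<bullet> (W *\<^sub>v a) = (transpose_mat W *\<^sub>v y) \<bullet> a"
        by (rule dot_transpose[OF W y a])
      also have "\<dots> = (\<Sum>k\<in>{0..<n}. a $ k * f (l + k))"
        unfolding M_def[symmetric] using WTy M a y by (auto simp: scalar_prod_def mult.commute intro!: sum.cong)
      finally have eq: "y \<bullet> (W *\<^sub>v a) = (\<Sum>k\<in>{0..<n}. a $ k * f (l + k))" .
      have "q dvd y \<bullet> (W *\<^sub>v a)" by (rule dot_dvd[OF y _ ], insert W a Wa, auto)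
      hence s: "q dvd (\<Sum>k\<in>{0..<n}. a $ k * f (l + k))" unfolding eq .
      have "(\<Sum>k\<in>{0..<n}. a $ k * f (l + k)) = a $ d * f (l + d) + (\<Sum>k\<in>{0..<n} - {d}. a $ k * f (l + k))"
        using d by (simp add: sum.remove)
      moreover have "q dvd (\<Sum>k\<in>{0..<n} - {d}. a $ k * f (l + k))"
      proof (rule dvd_sum)
        fix k assume k: "k \<in> {0..<n} - {d}"
        show "q dvd a $ k * f (l + k)"
        proof (cases "k < d")
          case True
          then have "l + k < n" unfolding l_def using d by simp
          then show ?thesis using fdvd by simp
        next
          case False
          then have "q dvd a $ k" using dmax k by auto
          then show ?thesis by simp
        qed
      qed
      ultimately have "q dvd a $ d * f (l + d)" using s by (simp add: dvd_add_left_iff)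
      hence "q dvd f (l + d)" using q d by (simp add: prime_dvd_mult_iff)
      moreover have "l + d = n" unfolding l_def using d by simp
      ultimately show ?thesis by simp
    qed
    define s where "s = S *\<^sub>v z"
    have s: "s \<in> carrier_vec n" unfolding s_def carrier_vec_def using S by simp
    have Ms: "q dvd (M *\<^sub>v s) $ k" if k: "k < n" for k
    proof -
      have Ske: "S ^\<^sub>m k *\<^sub>v e \<in> carrier_vec n" unfolding carrier_vec_def using S by simp
      have "(M *\<^sub>v s) $ k = (S ^\<^sub>m k *\<^sub>v e) \<bullet> (S *\<^sub>v z)" unfolding s_def by (rule Mv[OF k])
      also have "\<dots> = (transpose_mat S *\<^sub>v (S ^\<^sub>m k *\<^sub>v e)) \<bullet> z"
        by (rule dot_transpose[OF S Ske z_dim])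
      also have "\<dots> = - ((S *\<^sub>v (S ^\<^sub>m k *\<^sub>v e)) \<bullet> z)"
        unfolding STv[OF Ske] using S z_dim by simp
      also have "S *\<^sub>v (S ^\<^sub>m k *\<^sub>v e) = S ^\<^sub>m Suc k *\<^sub>v e"
        unfolding pow_mat_Suc_left[OF S] by (rule assoc_mult_mat_vec[symmetric, OF S pow_carrier_mat[OF S] e])
      finally have "(M *\<^sub>v s) $ k = - f (Suc k)" unfolding f_def .
      moreover have "q dvd f (Suc k)"
      proof (cases "Suc k < n")
        case True then show ?thesis by (rule fdvd)
      next
        case False then have "Suc k = n" using k by simp
        then show ?thesis using fn by simp
      qed
      ultimately show ?thesis by simp
    qed
    have Q0c: "Q0 \<in> carrier_mat n n" and QTQ: "transpose_mat Q0 * Q0 = 1\<^sub>m n"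
      using Q0_orth unfolding rat_orthogonal_def by auto
    have QTc: "transpose_mat Q0 \<in> carrier_mat n n" using Q0c by simp
    have QQT: "Q0 * transpose_mat Q0 = 1\<^sub>m n" by (rule mat_mult_left_right_inverse[OF QTc Q0c QTQ])
    define Sr where "Sr = map_mat rat_of_int S"
    have Src: "Sr \<in> carrier_mat n n" unfolding Sr_def using S by simp
    have mapneg: "map_mat rat_of_int (- X) = - map_mat rat_of_int X" for X :: "int mat"
      by (rule eq_matI) auto
    have conj: "transpose_mat Q0 * Sr * Q0 = - Sr"
      using Q0_conj unfolding skew_transpose(2)[OF or] mapneg Sr_def S_def .
    have R2: "Sr * Q0 = - (Q0 * Sr)"
    proof -
      have "Sr * Q0 = (Q0 * transpose_mat Q0) * Sr * Q0" unfolding QQT using Src Q0c by simp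
      also have "\<dots> = Q0 * (transpose_mat Q0 * Sr * Q0)"
        using Src Q0c QTc by (simp add: assoc_mult_mat[of _ n n _ n _ n])
      also have "\<dots> = - (Q0 * Sr)" unfolding conj using Q0c Src by simp
      finally show ?thesis .
    qed
    have R3: "transpose_mat Q0 * Sr = - (Sr * transpose_mat Q0)"
    proof -
      have "transpose_mat Q0 * Sr = transpose_mat Q0 * Sr * (Q0 * transpose_mat Q0)" unfolding QQT using Src QTc by simp
      also have "\<dots> = (transpose_mat Q0 * Sr * Q0) * transpose_mat Q0"
        using Src Q0c QTc by (simp add: assoc_mult_mat[of _ n n _ n _ n])
      also have "\<dots> = - (Sr * transpose_mat Q0)" unfolding conj using QTc Src by simp
      finally show ?thesis .
    qed
    define er where "er = vec n (\<lambda>_. 1::rat)"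
    have er: "er \<in> carrier_vec n" unfolding er_def by simp
    have R4: "transpose_mat Q0 *\<^sub>v er = er"
    proof -
      have "transpose_mat Q0 *\<^sub>v er = transpose_mat Q0 *\<^sub>v (Q0 *\<^sub>v er)"
        using Q0_reg unfolding regular_def er_def by simp
      also have "\<dots> = er" using assoc_mult_mat_vec[OF QTc Q0c er] QTQ er by simp
      finally show ?thesis .
    qed
    define lv where "lv = level Q0"
    have lv: "lv > 0" "\<forall>i<n. \<forall>j<n. of_nat lv * Q0 $$ (i,j) \<in> \<int>"
      using level_props[OF Q0c] unfolding lv_def by auto
    define P where "P = mat n n (\<lambda>(i,j). \<lfloor>of_nat lv * Q0 $$ (i,j)\<rfloor>)"
    have P: "P \<in> carrier_mat n n" unfolding P_def by simp
    have PT: "transpose_mat P \<in> carrier_mat n n" using P by simp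
    have Pr: "map_mat rat_of_int P = of_nat lv \<cdot>\<^sub>m Q0"
    proof (rule eq_matI)
      fix i j assume ij: "i < dim_row (of_nat lv \<cdot>\<^sub>m Q0)" "j < dim_col (of_nat lv \<cdot>\<^sub>m Q0)"
      hence ij': "i < n" "j < n" using Q0c by auto
      then obtain k where k: "of_nat lv * Q0 $$ (i,j) = of_int k" using lv(2) Ints_cases by metis
      show "map_mat rat_of_int P $$ (i,j) = (of_nat lv \<cdot>\<^sub>m Q0) $$ (i,j)"
        using ij' k Q0c unfolding P_def by simp
    qed (insert Q0c, auto simp: P_def)
    have PTr: "map_mat rat_of_int (transpose_mat P) = of_nat lv \<cdot>\<^sub>m transpose_mat Q0"
      unfolding map_mat_transpose[symmetric] Pr by (rule eq_matI) auto
    have smneg: "c \<cdot>\<^sub>m (- X) = - (c \<cdot>\<^sub>m X)" for c :: rat and X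
      by (rule eq_matI) auto
    have I4: "S * P = - (P * S)"
    proof (rule mat_of_int_inj)
      show "S * P \<in> carrier_mat n n" "- (P * S) \<in> carrier_mat n n" using S P by auto
      have "map_mat rat_of_int (S * P) = Sr * (of_nat lv \<cdot>\<^sub>m Q0)"
        unfolding Sr_def Pr[symmetric] by (rule of_int_hom.mat_hom_mult[OF S P])
      also have "\<dots> = of_nat lv \<cdot>\<^sub>m (Sr * Q0)" by (rule mult_smult_distrib[OF Src Q0c])
      also have "\<dots> = - (of_nat lv \<cdot>\<^sub>m (Q0 * Sr))" unfolding R2 smneg ..
      also have "of_nat lv \<cdot>\<^sub>m (Q0 * Sr) = (of_nat lv \<cdot>\<^sub>m Q0) * Sr"
        by (rule mult_smult_assoc_mat[OF Q0c Src, symmetric])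
      also have "\<dots> = map_mat rat_of_int (P * S)"
        unfolding Sr_def Pr[symmetric] by (rule of_int_hom.mat_hom_mult[OF P S, symmetric])
      finally show "map_mat rat_of_int (S * P) = map_mat rat_of_int (- (P * S))" unfolding mapneg .
    qed
    have I1: "transpose_mat P * S = - (S * transpose_mat P)"
    proof (rule mat_of_int_inj)
      show "transpose_mat P * S \<in> carrier_mat n n" "- (S * transpose_mat P) \<in> carrier_mat n n" using S PT by auto
      have "map_mat rat_of_int (transpose_mat P * S) = (of_nat lv \<cdot>\<^sub>m transpose_mat Q0) * Sr"
        unfolding Sr_def PTr[symmetric] by (rule of_int_hom.mat_hom_mult[OF PT S])
      also have "\<dots> = of_nat lv \<cdot>\<^sub>m (transpose_mat Q0 * Sr)" by (rule mult_smult_assoc_mat[OF QTc Src])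
      also have "\<dots> = - (of_nat lv \<cdot>\<^sub>m (Sr * transpose_mat Q0))" unfolding R3 smneg ..
      also have "of_nat lv \<cdot>\<^sub>m (Sr * transpose_mat Q0) = Sr * (of_nat lv \<cdot>\<^sub>m transpose_mat Q0)"
        by (rule mult_smult_distrib[OF Src QTc, symmetric])
      also have "\<dots> = map_mat rat_of_int (S * transpose_mat P)"
        unfolding Sr_def PTr[symmetric] by (rule of_int_hom.mat_hom_mult[OF S PT, symmetric])
      finally show "map_mat rat_of_int (transpose_mat P * S) = map_mat rat_of_int (- (S * transpose_mat P))" unfolding mapneg .
    qed
    have I3: "transpose_mat P * P = (int lv ^ 2) \<cdot>\<^sub>m 1\<^sub>m n"
    proof (rule mat_of_int_inj)
      show "transpose_mat P * P \<in> carrier_mat n n" "(int lv ^ 2) \<cdot>\<^sub>m 1\<^sub>m n \<in> carrier_mat n n" using P by auto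
      have "map_mat rat_of_int (transpose_mat P * P) = (of_nat lv \<cdot>\<^sub>m transpose_mat Q0) * (of_nat lv \<cdot>\<^sub>m Q0)"
        unfolding PTr[symmetric] Pr[symmetric] by (rule of_int_hom.mat_hom_mult[OF PT P])
      also have "\<dots> = (of_nat lv * of_nat lv) \<cdot>\<^sub>m (transpose_mat Q0 * Q0)"
        unfolding mult_smult_assoc_mat[OF QTc smult_carrier_mat[OF Q0c]] mult_smult_distrib[OF QTc Q0c]
        by (rule eq_matI) auto
      also have "\<dots> = map_mat rat_of_int ((int lv ^ 2) \<cdot>\<^sub>m 1\<^sub>m n)" unfolding QTQ
        by (rule eq_matI) (auto simp: power2_eq_square)
      finally show "map_mat rat_of_int (transpose_mat P * P) = map_mat rat_of_int ((int lv ^ 2) \<cdot>\<^sub>m 1\<^sub>m n)" .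
    qed
    have I2: "transpose_mat P *\<^sub>v e = int lv \<cdot>\<^sub>v e"
    proof -
      have "map_vec rat_of_int (transpose_mat P *\<^sub>v e) = (of_nat lv \<cdot>\<^sub>m transpose_mat Q0) *\<^sub>v er"
      proof -
        have "map_vec rat_of_int e = er" unfolding e_def er_def by (intro eq_vecI) auto
        moreover have "map_vec rat_of_int (transpose_mat P *\<^sub>v e) = map_mat rat_of_int (transpose_mat P) *\<^sub>v map_vec rat_of_int e"
          by (rule of_int_hom.mult_mat_vec_hom[OF PT e])
        ultimately show ?thesis unfolding PTr by simp
      qed
      also have "\<dots> = of_nat lv \<cdot>\<^sub>v (transpose_mat Q0 *\<^sub>v er)"
        using QTc er by (intro eq_vecI) auto
      also have "\<dots> = map_vec rat_of_int (int lv \<cdot>\<^sub>v e)" unfolding R4 unfolding er_def e_def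
        by (intro eq_vecI) auto
      finally have eq: "map_vec rat_of_int (transpose_mat P *\<^sub>v e) = map_vec rat_of_int (int lv \<cdot>\<^sub>v e)" .
      show ?thesis
      proof (rule eq_vecI)
        fix i assume "i < dim_vec (int lv \<cdot>\<^sub>v e)"
        hence i: "i < n" using e by simp
        have "map_vec rat_of_int (transpose_mat P *\<^sub>v e) $ i = map_vec rat_of_int (int lv \<cdot>\<^sub>v e) $ i"
          using eq by simp
        then have "rat_of_int ((transpose_mat P *\<^sub>v e) $ i) = rat_of_int ((int lv \<cdot>\<^sub>v e) $ i)"
          using i PT e by simp
        then show "(transpose_mat P *\<^sub>v e) $ i = (int lv \<cdot>\<^sub>v e) $ i" by (simp only: of_int_eq_iff)
      qed (insert PT e, auto)
    qed
    have I1v: "transpose_mat P *\<^sub>v (S *\<^sub>v x) = - (S *\<^sub>v (transpose_mat P *\<^sub>v x))" if x: "x \<in> carrier_vec n" for x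
    proof -
      have "transpose_mat P *\<^sub>v (S *\<^sub>v x) = (transpose_mat P * S) *\<^sub>v x"
        using PT S x by simp
      also have "\<dots> = - ((S * transpose_mat P) *\<^sub>v x)" unfolding I1 using S PT x by simp
      also have "(S * transpose_mat P) *\<^sub>v x = S *\<^sub>v (transpose_mat P *\<^sub>v x)" using S PT x by simp
      finally show ?thesis .
    qed
    have I4v: "P *\<^sub>v (S *\<^sub>v x) = - (S *\<^sub>v (P *\<^sub>v x))" if x: "x \<in> carrier_vec n" for x
    proof -
      have "S *\<^sub>v (P *\<^sub>v x) = (S * P) *\<^sub>v x" using P S x by simp
      also have "\<dots> = - ((P * S) *\<^sub>v x)" unfolding I4 using S P x by simp
      also have "(P * S) *\<^sub>v x = P *\<^sub>v (S *\<^sub>v x)" using S P x by simp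
      finally show ?thesis by simp
    qed
    have PSk: "transpose_mat P *\<^sub>v (S ^\<^sub>m k *\<^sub>v e) = ((-1)^k * int lv) \<cdot>\<^sub>v (S ^\<^sub>m k *\<^sub>v e)" for k
    proof (induction k)
      case 0
      have "S ^\<^sub>m 0 *\<^sub>v e = e" using S e by simp
      then show ?case using I2 by simp
    next
      case (Suc k)
      have Ske: "S ^\<^sub>m k *\<^sub>v e \<in> carrier_vec n" unfolding carrier_vec_def using S by simp
      have eq: "S ^\<^sub>m Suc k *\<^sub>v e = S *\<^sub>v (S ^\<^sub>m k *\<^sub>v e)"
        unfolding pow_mat_Suc_left[OF S] by (rule assoc_mult_mat_vec[OF S pow_carrier_mat[OF S] e])
      show ?case unfolding eq I1v[OF Ske] Suc mult_mat_vec_smult_int[OF S Ske]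
        by (intro eq_vecI) auto
    qed
    define w where "w = P *\<^sub>v z"
    have w: "w \<in> carrier_vec n" unfolding w_def carrier_vec_def using P by simp
    have Mw: "q dvd (M *\<^sub>v w) $ k" if k: "k < n" for k
    proof -
      have Ske: "S ^\<^sub>m k *\<^sub>v e \<in> carrier_vec n" unfolding carrier_vec_def using S by simp
      have "(M *\<^sub>v w) $ k = (S ^\<^sub>m k *\<^sub>v e) \<bullet> (P *\<^sub>v z)" unfolding w_def by (rule Mv[OF k])
      also have "\<dots> = (transpose_mat P *\<^sub>v (S ^\<^sub>m k *\<^sub>v e)) \<bullet> z"
        by (rule dot_transpose[OF P Ske z_dim])
      also have "\<dots> = ((-1)^k * int lv) * f k" unfolding PSk f_def using Ske z_dim by simp
      finally show ?thesis using fdvd[OF k] by simp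
    qed
    have ndM: "\<not> q^2 dvd det M" using ndW detM by simp
    have Mz': "\<forall>i<n. q dvd (M *\<^sub>v z) $ i" using Mz by auto
    obtain a1 b1 where ab1: "\<not> (q dvd a1 \<and> q dvd b1)" and D1: "\<forall>i<n. q dvd (a1 * z$i + b1 * s$i)"
      using dep_lemma[OF M q ndM z_dim s Mz'] Ms by auto
    obtain a2 b2 where ab2: "\<not> (q dvd a2 \<and> q dvd b2)" and D2: "\<forall>i<n. q dvd (a2 * z$i + b2 * w$i)"
      using dep_lemma[OF M q ndM z_dim w Mz'] Mw by auto
    define x1 where "x1 = vec n (\<lambda>k. a1 * z$k + b1 * s$k)"
    define x2 where "x2 = vec n (\<lambda>k. a2 * z$k + b2 * w$k)"
    have x1: "x1 \<in> carrier_vec n" and x2: "x2 \<in> carrier_vec n" unfolding x1_def x2_def by auto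
    have Sw: "S *\<^sub>v w \<in> carrier_vec n" unfolding carrier_vec_def using S by simp
    have E1: "q dvd (a1 * w$i - b1 * (S *\<^sub>v w)$i)" if i: "i < n" for i
    proof -
      have "q dvd (P *\<^sub>v x1) $ i" by (rule mv_dvd[OF P x1 _ i], insert D1, auto simp: x1_def)
      also have "(P *\<^sub>v x1) $ i = a1 * (P *\<^sub>v z)$i + b1 * (P *\<^sub>v s)$i"
        unfolding x1_def by (rule mv_lin[OF P z_dim s i])
      also have "P *\<^sub>v s = - (S *\<^sub>v w)" unfolding s_def w_def by (rule I4v[OF z_dim])
      finally have "q dvd a1 * (P *\<^sub>v z) $ i + b1 * (- (S *\<^sub>v w)) $ i" unfolding w_def .
      moreover have "(- (S *\<^sub>v w)) $ i = - (S *\<^sub>v w) $ i" using i S by simp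
      ultimately show ?thesis unfolding w_def by simp
    qed
    have E2: "q dvd (a2 * s$i + b2 * (S *\<^sub>v w)$i)" if i: "i < n" for i
    proof -
      have "q dvd (S *\<^sub>v x2) $ i" by (rule mv_dvd[OF S x2 _ i], insert D2, auto simp: x2_def)
      also have "(S *\<^sub>v x2) $ i = a2 * (S *\<^sub>v z)$i + b2 * (S *\<^sub>v w)$i"
        unfolding x2_def by (rule mv_lin[OF S z_dim w i])
      finally show ?thesis unfolding s_def .
    qed
    have comb: "q dvd 2 * a1 * a2 * z$i" if i: "i < n" for i
    proof -
      have "q dvd b2 * (a1 * w$i - b1 * (S *\<^sub>v w)$i) - a1 * (a2 * z$i + b2 * w$i)
               + b1 * (a2 * s$i + b2 * (S *\<^sub>v w)$i) - a2 * (a1 * z$i + b1 * s$i)"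
      proof -
        have h1: "q dvd b2 * (a1 * w$i - b1 * (S *\<^sub>v w)$i)" by (rule dvd_mult[OF E1[OF i]])
        have h2: "q dvd a1 * (a2 * z$i + b2 * w$i)" by (rule dvd_mult, insert D2 i, auto)
        have h3: "q dvd b1 * (a2 * s$i + b2 * (S *\<^sub>v w)$i)" by (rule dvd_mult[OF E2[OF i]])
        have h4: "q dvd a2 * (a1 * z$i + b1 * s$i)" by (rule dvd_mult, insert D1 i, auto)
        show ?thesis by (rule dvd_diff[OF dvd_add[OF dvd_diff[OF h1 h2] h3] h4])
      qed
      also have "b2 * (a1 * w$i - b1 * (S *\<^sub>v w)$i) - a1 * (a2 * z$i + b2 * w$i)
               + b1 * (a2 * s$i + b2 * (S *\<^sub>v w)$i) - a2 * (a1 * z$i + b1 * s$i) = - (2 * a1 * a2 * z$i)"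
        by (simp add: algebra_simps)
      finally show ?thesis by simp
    qed
    have nq2: "\<not> q dvd 2"
    proof
      assume "q dvd 2"
      hence "p dvd 2" unfolding q_def by presburger
      hence "p \<le> 2" by (simp add: dvd_imp_le)
      with prime_ge_2_nat[OF p_prime] have "p = 2" by simp
      with p_odd show False by simp
    qed
    have "q dvd a1 \<or> q dvd a2"
      using comb[OF i0(1)] i0(2) nq2 q by (simp add: prime_dvd_mult_iff)
    then show ?thesis
    proof
      assume qa1: "q dvd a1"
      hence nb1: "\<not> q dvd b1" using ab1 by auto
      have "q dvd s$i" if i: "i < n" for i
      proof -
        have "q dvd (a1 * z$i + b1 * s$i) - a1 * z$i" using D1 i qa1 by (intro dvd_diff) auto
        hence "q dvd b1 * s$i" by simp
        thus ?thesis using nb1 q by (simp add: prime_dvd_mult_iff)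
      qed
      then show ?thesis unfolding q_def[symmetric] TS
        using STv[OF z_dim] z_dim S unfolding s_def by auto
    next
      assume qa2: "q dvd a2"
      hence nb2: "\<not> q dvd b2" using ab2 by auto
      have wd: "\<forall>i<n. q dvd w$i"
      proof (intro allI impI)
        fix i assume i: "i < n"
        have "q dvd (a2 * z$i + b2 * w$i) - a2 * z$i" using D2 i qa2 by (intro dvd_diff) auto
        hence "q dvd b2 * w$i" by simp
        thus "q dvd w$i" using nb2 q by (simp add: prime_dvd_mult_iff)
      qed
      have "q dvd (transpose_mat P *\<^sub>v w) $ i0" by (rule mv_dvd[OF PT w wd i0(1)])
      also have "transpose_mat P *\<^sub>v w = (int lv ^ 2) \<cdot>\<^sub>v z"
        unfolding w_def using assoc_mult_mat_vec[OF PT P z_dim] I3 smult_one_mat_vec[OF z_dim] by simp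
      finally have "q dvd int lv ^ 2 * z $ i0" using i0 z_dim by simp
      hence "q dvd int lv" using i0(2) q by (simp add: prime_dvd_mult_iff prime_dvd_power_iff)
      hence "p dvd lv" unfolding q_def by simp
      with p_ndvd show ?thesis unfolding lv_def by simp
    qed
  qed
qed

end
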